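(* Let $k_1,k_2\in\mathbb{Z}_{>0}$, $\theta_1=1/k_1$, $\theta_2=1/k_2$, and let $d\mu_1,d\mu_2$ be non-negative measures on $\mathbb{R}_+$ for which all the moments below are finite. Let $\langle f(x),g(y)\rangle=\int_{\mathbb{R}_+\times\mathbb{R}_+}\frac{f(x)g(y)}{x+y}\,d\mu_1(x)\,d\mu_2(y)$, and let $\{P_n(x^{\theta_1}),Q_n(y^{\theta_2})\}_{n\ge0}$ be the monic two-parameter Cauchy bi-orthogonal polynomials ($P_n$ monic of degree $n$ in $x^{\theta_1}$, $Q_n$ monic of degree $n$ in $y^{\theta_2}$, $\langle P_n(x^{\theta_1}),Q_m(y^{\theta_2})\rangle=h_n\delta_{n,m}$, $h_n>0$). Then for each $n\ge0$ $$y\left(Q_{n+1}(y^{\theta_2})+\hat a_nQ_n(y^{\theta_2})\right)=\sum_{\alpha=n-k_1}^{n+k_2+1}\hat\eta_{n,\alpha}Q_\alpha(y^{\theta_2}),$$ where $$\hat a_n=-\frac{\int_{\mathbb{R}_+}Q_{n+1}(y^{\theta_2})\,d\mu_2(y)}{\int_{\mathbb{R}_+}Q_{n}(y^{\theta_2})\,d\mu_2(y)},\qquad \hat\eta_{n,\alpha}=\frac{\langle P_\alpha(x^{\theta_1}),\, y(Q_{n+1}(y^{\theta_2})+\hat a_nQ_n(y^{\theta_2}))\rangle}{\langle P_\alpha(x^{\theta_1}), Q_\alpha(y^{\theta_2})\rangle}$$ (and $Q_\alpha:=0$ for $\alpha<0$).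
   Context: The polynomials exist and are unique provided the determinants $\tau_n=\det(\langle x^{(k-1)\theta_1},y^{(l-1)\theta_2}\rangle)_{k,l=1}^n$ are nonzero for all $n$, which is assumed. Quantities appearing in denominators are assumed nonzero so that the coefficients are defined. *)

theory Defs
  imports "HOL-Analysis.Analysis" "HOL-Probability.Probability" "HOL-Computational_Algebra.Polynomial"
begin

definition cpair :: "real measure \<Rightarrow> real measure \<Rightarrow> (real \<Rightarrow> real) \<Rightarrow> (real \<Rightarrow> real) \<Rightarrow> real" where
  "cpair mu1 mu2 f g = integral\<^sup>L (mu1 \<Otimes>\<^sub>M mu2) (\<lambda>(x, y). f x * g y / (x + y))"

end

theory Submission
  imports Defs
begin


lemma zero_space_integral:
  assumes "emeasure M (space M) = 0"
  shows "integral\<^sup>L M (f::_\<Rightarrow>real) = 0"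
proof -
  have "AE x in M. f x = 0"
    using assms by (intro AE_I'[of "space M"]) (auto simp: null_sets_def)
  then show ?thesis by (rule integral_eq_zero_AE)
qed

lemma pair_rect_general:
  fixes M1 :: "'a measure" and M2 :: "'b measure"
  assumes nz: "integral\<^sup>L (M1 \<Otimes>\<^sub>M M2) (f::_\<Rightarrow>real) \<noteq> 0"
  assumes A: "A \<in> sets M1" and B: "B \<in> sets M2"
  shows "emeasure (M1 \<Otimes>\<^sub>M M2) (A \<times> B) = emeasure M1 A * emeasure M2 B"
proof -
  let ?\<Omega> = "space M1 \<times> space M2"
  let ?G = "{a \<times> b | a b. a \<in> sets M1 \<and> b \<in> sets M2}"
  let ?mu = "\<lambda>X. \<integral>\<^sup>+x. (\<integral>\<^sup>+y. indicator X (x,y) \<partial>M2) \<partial>M1"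
  have conv: "emeasure (M1 \<Otimes>\<^sub>M M2) = (\<lambda>B. if B \<in> sigma_sets ?\<Omega> ?G \<and> measure_space ?\<Omega> (sigma_sets ?\<Omega> ?G) ?mu then ?mu B else 0)"
    unfolding pair_measure_def by (rule emeasure_measure_of_conv)
  have ms: "measure_space ?\<Omega> (sigma_sets ?\<Omega> ?G) ?mu"
  proof (rule ccontr)
    assume "\<not> ?thesis"
    then have "emeasure (M1 \<Otimes>\<^sub>M M2) (space (M1 \<Otimes>\<^sub>M M2)) = 0" by (simp add: conv)
    then show False using nz zero_space_integral by blast
  qed
  have AB: "A \<times> B \<in> sigma_sets ?\<Omega> ?G"
    using A B by (intro sigma_sets.Basic) blast
  have "emeasure (M1 \<Otimes>\<^sub>M M2) (A \<times> B) = ?mu (A \<times> B)"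
    using ms AB by (simp add: conv)
  also have "\<dots> = \<integral>\<^sup>+x. emeasure M2 B * indicator A x \<partial>M1"
  proof (intro nn_integral_cong)
    fix x assume "x \<in> space M1"
    have "(\<integral>\<^sup>+y. indicator (A \<times> B) (x,y) \<partial>M2) = (\<integral>\<^sup>+y. indicator A x * indicator B y \<partial>M2)"
      by (intro nn_integral_cong) (auto simp: indicator_def)
    also have "\<dots> = indicator A x * emeasure M2 B"
      using B by (simp add: nn_integral_cmult)
    finally show "(\<integral>\<^sup>+y. indicator (A \<times> B) (x,y) \<partial>M2) = emeasure M2 B * indicator A x"
      by (simp add: mult.commute)
  qed
  also have "\<dots> = emeasure M2 B * emeasure M1 A"
    using A by (simp add: nn_integral_cmult_indicator)
  finally show ?thesis by (simp add: mult.commute)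
qed

lemma fin_zero1:
  fixes mu1 mu2 :: "real measure"
  assumes sets1: "sets mu1 = sets borel" and sets2: "sets mu2 = sets borel"
    and diag: "AE p in mu1 \<Otimes>\<^sub>M mu2. fst p + snd p > 0"
    and nz: "integral\<^sup>L (mu1 \<Otimes>\<^sub>M mu2) (\<lambda>(x,y). 1 / (x + y)) \<noteq> (0::real)"
  shows "emeasure mu1 {0} \<noteq> \<infinity>"
proof
  assume inf: "emeasure mu1 {0} = \<infinity>"
  have sp1: "space mu1 = UNIV" using sets_eq_imp_space_eq[OF sets1] by simp
  have sp2: "space mu2 = UNIV" using sets_eq_imp_space_eq[OF sets2] by simp
  have sp: "space (mu1 \<Otimes>\<^sub>M mu2) = UNIV" by (simp add: space_pair_measure sp1 sp2)
  have [simp]: "A \<in> sets mu1" "B \<in> sets mu2" if "A \<in> sets borel" "B \<in> sets borel" for A B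
    using that sets1 sets2 by auto
  have rect: "emeasure (mu1 \<Otimes>\<^sub>M mu2) (A \<times> B) = emeasure mu1 A * emeasure mu2 B"
    if "A \<in> sets borel" "B \<in> sets borel" for A B
    using pair_rect_general[OF nz] that by simp
  have I: "integrable (mu1 \<Otimes>\<^sub>M mu2) (\<lambda>(x,y). 1 / (x + y) :: real)"
    using nz not_integrable_integral_eq by blast
  have bnd: "(\<integral>\<^sup>+p. ennreal (norm ((\<lambda>(x,y). 1 / (x + y) :: real) p)) \<partial>(mu1 \<Otimes>\<^sub>M mu2)) < \<infinity>"
    using integrable_iff_bounded[THEN iffD1, OF I] by (rule conjunct2)
  have a: "emeasure mu2 {..0} = 0"
  proof -
    from diag obtain N where N1: "{p\<in>space (mu1 \<Otimes>\<^sub>M mu2). \<not> (fst p + snd p > 0)} \<subseteq> N"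
      and N2: "emeasure (mu1 \<Otimes>\<^sub>M mu2) N = 0" and N3: "N \<in> sets (mu1 \<Otimes>\<^sub>M mu2)" by (rule AE_E)
    have "{0::real} \<times> {..0::real} \<subseteq> N"
    proof (rule subsetI)
      fix p assume "p \<in> {0::real} \<times> {..0::real}"
      then have "p \<in> {p\<in>space (mu1 \<Otimes>\<^sub>M mu2). \<not> (fst p + snd p > 0)}" using sp by auto
      then show "p \<in> N" using N1 by blast
    qed
    then have "emeasure (mu1 \<Otimes>\<^sub>M mu2) ({0} \<times> {..0}) \<le> emeasure (mu1 \<Otimes>\<^sub>M mu2) N"
      using N3 by (rule emeasure_mono)
    moreover note N2
    ultimately have "emeasure (mu1 \<Otimes>\<^sub>M mu2) ({0} \<times> {..0}) = 0" by simp
    then have "emeasure mu1 {0} * emeasure mu2 {..0} = 0" using rect[of "{0}" "{..0}"] by simp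
    then show ?thesis using inf by (simp add: ennreal_top_mult split: if_splits)
  qed
  have b: "emeasure mu2 {0<..real (Suc m)} = 0" for m
  proof (rule ccontr)
    assume ne: "emeasure mu2 {0<..real (Suc m)} \<noteq> 0"
    let ?R = "{0::real} \<times> {0<..real (Suc m)}"
    have "(\<integral>\<^sup>+p. ennreal (1 / real (Suc m)) * indicator ?R p \<partial>(mu1 \<Otimes>\<^sub>M mu2))
        \<le> (\<integral>\<^sup>+p. ennreal (norm ((\<lambda>(x,y). 1 / (x + y) :: real) p)) \<partial>(mu1 \<Otimes>\<^sub>M mu2))"
    proof (intro nn_integral_mono)
      fix p :: "real \<times> real"
      show "ennreal (1 / real (Suc m)) * indicator ?R p \<le> ennreal (norm ((\<lambda>(x,y). 1 / (x + y) :: real) p))"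
      proof (cases "p \<in> ?R")
        case True
        then obtain y where p: "p = (0, y)" "0 < y" "y \<le> real (Suc m)" by auto
        have "1 / real (Suc m) \<le> 1 / y" using p by (intro divide_left_mono) auto
        then show ?thesis using p by (simp add: ennreal_leI)
      qed simp
    qed
    also have "\<dots> < \<infinity>" by (rule bnd)
    finally have lt: "(\<integral>\<^sup>+p. ennreal (1 / real (Suc m)) * indicator ?R p \<partial>(mu1 \<Otimes>\<^sub>M mu2)) < \<infinity>" .
    have Rs: "?R \<in> sets (mu1 \<Otimes>\<^sub>M mu2)" by (rule pair_measureI) (simp_all add: sets1 sets2)
    have "ennreal (1 / real (Suc m)) * emeasure (mu1 \<Otimes>\<^sub>M mu2) ?R < \<infinity>"
      using lt[unfolded nn_integral_cmult_indicator[OF Rs]] .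
    moreover have "emeasure (mu1 \<Otimes>\<^sub>M mu2) ?R = \<infinity>"
      using rect[of "{0}" "{0<..real (Suc m)}"] inf ne by (simp add: ennreal_top_mult)
    ultimately show False by simp
  qed
  have c: "emeasure mu2 {0<..} = 0"
  proof -
    have "{0::real<..} = (\<Union>m. {0<..real (Suc m)})"
    proof (intro equalityI subsetI)
      fix x :: real assume "x \<in> {0<..}"
      obtain m where "x < real m" using reals_Archimedean2 by blast
      then have "x \<in> {0<..real (Suc m)}" using \<open>x \<in> {0<..}\<close> by auto
      then show "x \<in> (\<Union>m. {0<..real (Suc m)})" by blast
    qed auto
    moreover have "emeasure mu2 (\<Union>m. {0<..real (Suc m)}) = 0"
      using b by (intro emeasure_UN_eq_0) (auto simp: sets2)
    ultimately show ?thesis by simp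
  qed
  have "emeasure mu2 (space mu2) \<le> emeasure mu2 {..0} + emeasure mu2 {0<..}"
  proof -
    have "space mu2 = {..0} \<union> {0::real<..}" using sp2 by auto
    moreover have "emeasure mu2 ({..0} \<union> {0::real<..}) \<le> emeasure mu2 {..0} + emeasure mu2 {0<..}"
      by (intro emeasure_subadditive) (simp_all add: sets2)
    ultimately show ?thesis by simp
  qed
  then have "emeasure mu2 UNIV = 0" using a c sp2 by simp
  then have "emeasure (mu1 \<Otimes>\<^sub>M mu2) (space (mu1 \<Otimes>\<^sub>M mu2)) = 0"
    using rect[of UNIV UNIV] sp by simp
  then show False using nz zero_space_integral by blast
qed

lemma fin_zero2:
  fixes mu1 mu2 :: "real measure"
  assumes sets1: "sets mu1 = sets borel" and sets2: "sets mu2 = sets borel"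
    and diag: "AE p in mu1 \<Otimes>\<^sub>M mu2. fst p + snd p > 0"
    and nz: "integral\<^sup>L (mu1 \<Otimes>\<^sub>M mu2) (\<lambda>(x,y). 1 / (x + y)) \<noteq> (0::real)"
  shows "emeasure mu2 {0} \<noteq> \<infinity>"
proof
  assume inf: "emeasure mu2 {0} = \<infinity>"
  have sp1: "space mu1 = UNIV" using sets_eq_imp_space_eq[OF sets1] by simp
  have sp2: "space mu2 = UNIV" using sets_eq_imp_space_eq[OF sets2] by simp
  have sp: "space (mu1 \<Otimes>\<^sub>M mu2) = UNIV" by (simp add: space_pair_measure sp1 sp2)
  have [simp]: "A \<in> sets mu1" "B \<in> sets mu2" if "A \<in> sets borel" "B \<in> sets borel" for A B
    using that sets1 sets2 by auto
  have rect: "emeasure (mu1 \<Otimes>\<^sub>M mu2) (A \<times> B) = emeasure mu1 A * emeasure mu2 B"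
    if "A \<in> sets borel" "B \<in> sets borel" for A B
    using pair_rect_general[OF nz] that by simp
  have I: "integrable (mu1 \<Otimes>\<^sub>M mu2) (\<lambda>(x,y). 1 / (x + y) :: real)"
    using nz not_integrable_integral_eq by blast
  have bnd: "(\<integral>\<^sup>+p. ennreal (norm ((\<lambda>(x,y). 1 / (x + y) :: real) p)) \<partial>(mu1 \<Otimes>\<^sub>M mu2)) < \<infinity>"
    using integrable_iff_bounded[THEN iffD1, OF I] by (rule conjunct2)
  have a: "emeasure mu1 {..0} = 0"
  proof -
    from diag obtain N where N1: "{p\<in>space (mu1 \<Otimes>\<^sub>M mu2). \<not> (fst p + snd p > 0)} \<subseteq> N"
      and N2: "emeasure (mu1 \<Otimes>\<^sub>M mu2) N = 0" and N3: "N \<in> sets (mu1 \<Otimes>\<^sub>M mu2)" by (rule AE_E)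
    have "{..0::real} \<times> {0::real} \<subseteq> N"
    proof (rule subsetI)
      fix p assume "p \<in> {..0::real} \<times> {0::real}"
      then have "p \<in> {p\<in>space (mu1 \<Otimes>\<^sub>M mu2). \<not> (fst p + snd p > 0)}" using sp by auto
      then show "p \<in> N" using N1 by blast
    qed
    then have "emeasure (mu1 \<Otimes>\<^sub>M mu2) ({..0} \<times> {0}) \<le> emeasure (mu1 \<Otimes>\<^sub>M mu2) N"
      using N3 by (rule emeasure_mono)
    moreover note N2
    ultimately have "emeasure (mu1 \<Otimes>\<^sub>M mu2) ({..0} \<times> {0}) = 0" by simp
    then have "emeasure mu1 {..0} * emeasure mu2 {0} = 0" using rect[of "{..0}" "{0}"] by simp
    then show ?thesis using inf by (simp add: ennreal_top_mult split: if_splits)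
  qed
  have b: "emeasure mu1 {0<..real (Suc m)} = 0" for m
  proof (rule ccontr)
    assume ne: "emeasure mu1 {0<..real (Suc m)} \<noteq> 0"
    let ?R = "{0<..real (Suc m)} \<times> {0::real}"
    have "(\<integral>\<^sup>+p. ennreal (1 / real (Suc m)) * indicator ?R p \<partial>(mu1 \<Otimes>\<^sub>M mu2))
        \<le> (\<integral>\<^sup>+p. ennreal (norm ((\<lambda>(x,y). 1 / (x + y) :: real) p)) \<partial>(mu1 \<Otimes>\<^sub>M mu2))"
    proof (intro nn_integral_mono)
      fix p :: "real \<times> real"
      show "ennreal (1 / real (Suc m)) * indicator ?R p \<le> ennreal (norm ((\<lambda>(x,y). 1 / (x + y) :: real) p))"
      proof (cases "p \<in> ?R")
        case True
        then obtain y where p: "p = (y, 0)" "0 < y" "y \<le> real (Suc m)" by auto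
        have "1 / real (Suc m) \<le> 1 / y" using p by (intro divide_left_mono) auto
        then show ?thesis using p by (simp add: ennreal_leI)
      qed simp
    qed
    also have "\<dots> < \<infinity>" by (rule bnd)
    finally have lt: "(\<integral>\<^sup>+p. ennreal (1 / real (Suc m)) * indicator ?R p \<partial>(mu1 \<Otimes>\<^sub>M mu2)) < \<infinity>" .
    have Rs: "?R \<in> sets (mu1 \<Otimes>\<^sub>M mu2)" by (rule pair_measureI) (simp_all add: sets1 sets2)
    have "ennreal (1 / real (Suc m)) * emeasure (mu1 \<Otimes>\<^sub>M mu2) ?R < \<infinity>"
      using lt[unfolded nn_integral_cmult_indicator[OF Rs]] .
    moreover have "emeasure (mu1 \<Otimes>\<^sub>M mu2) ?R = \<infinity>"
      using rect[of "{0<..real (Suc m)}" "{0}"] inf ne by (simp add: ennreal_top_mult)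
    ultimately show False by simp
  qed
  have c: "emeasure mu1 {0<..} = 0"
  proof -
    have "{0::real<..} = (\<Union>m. {0<..real (Suc m)})"
    proof (intro equalityI subsetI)
      fix x :: real assume "x \<in> {0<..}"
      obtain m where "x < real m" using reals_Archimedean2 by blast
      then have "x \<in> {0<..real (Suc m)}" using \<open>x \<in> {0<..}\<close> by auto
      then show "x \<in> (\<Union>m. {0<..real (Suc m)})" by blast
    qed auto
    moreover have "emeasure mu1 (\<Union>m. {0<..real (Suc m)}) = 0"
      using b by (intro emeasure_UN_eq_0) (auto simp: sets1)
    ultimately show ?thesis by simp
  qed
  have "emeasure mu1 (space mu1) \<le> emeasure mu1 {..0} + emeasure mu1 {0<..}"
  proof -
    have "space mu1 = {..0} \<union> {0::real<..}" using sp1 by auto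
    moreover have "emeasure mu1 ({..0} \<union> {0::real<..}) \<le> emeasure mu1 {..0} + emeasure mu1 {0<..}"
      by (intro emeasure_subadditive) (simp_all add: sets1)
    ultimately show ?thesis by simp
  qed
  then have "emeasure mu1 UNIV = 0" using a c sp1 by simp
  then have "emeasure (mu1 \<Otimes>\<^sub>M mu2) (space (mu1 \<Otimes>\<^sub>M mu2)) = 0"
    using rect[of UNIV UNIV] sp by simp
  then show False using nz zero_space_integral by blast
qed




lemma fin_of_zero:
  fixes M :: "real measure"
  assumes sets: "sets M = sets borel" and int: "integrable M (\<lambda>x. x powr 0)"
    and z: "emeasure M {0} \<noteq> \<infinity>"
  shows "finite_measure M"
proof -
  have sp: "space M = UNIV" using sets_eq_imp_space_eq[OF sets] by simp
  have "(\<integral>\<^sup>+x. ennreal (norm (x powr 0)) \<partial>M) < \<infinity>"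
    using integrable_iff_bounded[THEN iffD1, OF int] by (rule conjunct2)
  moreover have "(\<integral>\<^sup>+x. ennreal (norm (x powr 0)) \<partial>M) = (\<integral>\<^sup>+x. indicator (UNIV - {0}) x \<partial>M)"
    by (intro nn_integral_cong) (auto simp: indicator_def)
  moreover have "(\<integral>\<^sup>+x. indicator (UNIV - {0::real}) x \<partial>M) = emeasure M (UNIV - {0})"
    by (rule nn_integral_indicator) (simp add: sets)
  ultimately have a: "emeasure M (UNIV - {0}) < \<infinity>" by simp
  have "emeasure M ({0} \<union> (UNIV - {0})) \<le> emeasure M {0} + emeasure M (UNIV - {0})"
    by (intro emeasure_subadditive) (simp_all add: sets)
  moreover have "{0::real} \<union> (UNIV - {0}) = UNIV" by auto
  ultimately have "emeasure M UNIV \<le> emeasure M {0} + emeasure M (UNIV - {0})" by simp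
  also have "\<dots> < \<infinity>" using a z by (simp add: less_top)
  finally show ?thesis by (intro finite_measureI) (simp add: sp)
qed

lemma powr_pow_inv:
  fixes y :: real
  assumes "0 \<le> y" "k > 0"
  shows "(y powr (1 / real k)) ^ k = y"
proof (cases "y = 0")
  case True then show ?thesis using assms by simp
next
  case False
  then have "(y powr (1 / real k)) ^ k = y powr (real k * (1 / real k))" by (rule powr_power)
  also have "\<dots> = y" using assms False by simp
  finally show ?thesis .
qed

lemma powr_pow_eq:
  fixes x :: real
  assumes "i > 0"
  shows "(x powr (1 / real k)) ^ i = x powr (real i / real k)"
proof (cases "x = 0")
  case True then show ?thesis using assms by simp
next
  case False
  then have "(x powr (1 / real k)) ^ i = x powr (real i * (1 / real k))" by (rule powr_power)
  then show ?thesis by simp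
qed

lemma poly_powr_integrable:
  fixes M :: "real measure"
  assumes fin: "finite_measure M" and mom: "\<And>i::nat. integrable M (\<lambda>x. x powr (real i / real k))"
  shows "integrable M (\<lambda>x. poly p (x powr (1 / real k)))"
proof -
  have pw: "integrable M (\<lambda>x. (x powr (1 / real k)) ^ i)" for i
  proof (cases "i = 0")
    case True then show ?thesis using finite_measure.integrable_const[OF fin] by simp
  next
    case False
    then show ?thesis using mom[of i] by (simp add: powr_pow_eq)
  qed
  have "integrable M (\<lambda>x. \<Sum>i\<le>degree p. coeff p i * (x powr (1 / real k)) ^ i)"
  proof (rule Bochner_Integration.integrable_sum)
    fix i show "integrable M (\<lambda>x. coeff p i * (x powr (1 / real k)) ^ i)" using pw[of i] by simp
  qed
  then show ?thesis by (simp add: poly_altdef)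
qed

lemma poly_bound1:
  fixes z :: real
  assumes "\<bar>z\<bar> \<le> 1"
  shows "\<bar>poly p z\<bar> \<le> (\<Sum>i\<le>degree p. \<bar>coeff p i\<bar>)"
proof -
  have "\<bar>poly p z\<bar> \<le> (\<Sum>i\<le>degree p. \<bar>coeff p i * z ^ i\<bar>)"
    unfolding poly_altdef by (rule sum_abs)
  also have "\<dots> \<le> (\<Sum>i\<le>degree p. \<bar>coeff p i\<bar>)"
  proof (intro sum_mono)
    fix i
    have "\<bar>z ^ i\<bar> \<le> 1" using assms by (simp add: power_abs power_le_one)
    then show "\<bar>coeff p i * z ^ i\<bar> \<le> \<bar>coeff p i\<bar>"
      by (simp add: abs_mult mult_left_le)
  qed
  finally show ?thesis .
qed

lemma degree_le_pred:
  fixes q :: "'a::zero poly"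
  assumes "degree q \<le> Suc N" "coeff q (Suc N) = 0"
  shows "degree q \<le> N"
proof (rule ccontr)
  assume "\<not> degree q \<le> N"
  then have "degree q = Suc N" using assms by simp
  then have "q \<noteq> 0" by auto
  then have "coeff q (degree q) \<noteq> 0" by simp
  then show False using assms \<open>degree q = Suc N\<close> by simp
qed

lemma monic_expand:
  fixes Fam :: "nat \<Rightarrow> 'a::field poly"
  assumes mon: "\<And>m. degree (Fam m) = m \<and> lead_coeff (Fam m) = 1"
  shows "degree p \<le> N \<Longrightarrow> \<exists>c. p = (\<Sum>j\<le>N. smult (c j) (Fam j))"
proof (induction N arbitrary: p)
  case 0
  have "degree (Fam 0) = 0" "lead_coeff (Fam 0) = 1" using mon[of 0] by auto
  then have F0: "Fam 0 = 1" by (metis degree_0_id one_pCons)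
  have "p = [:coeff p 0:]" using 0 by (simp add: degree_0_id)
  then have "p = (\<Sum>j\<le>0. smult ((\<lambda>_. coeff p 0) j) (Fam j))" using F0 by (simp add: smult_one)
  then show ?case by (rule exI[where x="\<lambda>_. coeff p 0"])
next
  case (Suc N)
  define q where "q = p - smult (coeff p (Suc N)) (Fam (Suc N))"
  have dF: "degree (Fam (Suc N)) = Suc N" and lF: "coeff (Fam (Suc N)) (Suc N) = 1"
    using mon[of "Suc N"] by auto
  have "degree q \<le> Suc N" unfolding q_def using Suc.prems dF
    by (intro degree_diff_le) (auto intro: order.trans[OF degree_smult_le])
  moreover have "coeff q (Suc N) = 0" unfolding q_def using lF by simp
  ultimately have "degree q \<le> N" by (rule degree_le_pred)
  then obtain c where c: "q = (\<Sum>j\<le>N. smult (c j) (Fam j))" using Suc.IH by blast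
  define c' where "c' = c(Suc N := coeff p (Suc N))"
  have "(\<Sum>j\<le>Suc N. smult (c' j) (Fam j)) = (\<Sum>j\<le>N. smult (c j) (Fam j)) + smult (coeff p (Suc N)) (Fam (Suc N))"
    unfolding c'_def by (simp add: sum.atMost_Suc)
  also have "\<dots> = q + smult (coeff p (Suc N)) (Fam (Suc N))" using c by simp
  also have "\<dots> = p" unfolding q_def by simp
  finally show ?case by metis
qed




lemma bound_pt:
  fixes x y a b A Bc :: real
  assumes "0 \<le> x" "0 \<le> y" "0 < x + y" "0 \<le> A" "0 \<le> Bc"
    and small: "x + y < 1 \<Longrightarrow> \<bar>a\<bar> \<le> A \<and> \<bar>b\<bar> \<le> Bc"
  shows "\<bar>a * b / (x + y)\<bar> \<le> A * Bc * (1 / (x + y)) + \<bar>a\<bar> * \<bar>b\<bar>"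
proof (cases "x + y < 1")
  case True
  then have "\<bar>a\<bar> * \<bar>b\<bar> \<le> A * Bc" using small by (intro mult_mono) auto
  then have "\<bar>a * b / (x + y)\<bar> \<le> A * Bc * (1 / (x + y))"
    using assms(3) by (simp add: abs_mult divide_right_mono)
  moreover have "0 \<le> \<bar>a\<bar> * \<bar>b\<bar>" by simp
  ultimately show ?thesis by linarith
next
  case False
  have e: "\<bar>a * b / (x + y)\<bar> = \<bar>a * b\<bar> / (x + y)" using assms(3) by simp
  have "\<bar>a * b\<bar> / (x + y) \<le> \<bar>a * b\<bar> / 1" using False by (intro divide_left_mono) auto
  then have "\<bar>a * b / (x + y)\<bar> \<le> \<bar>a * b\<bar>" using e by linarith
  then have "\<bar>a * b / (x + y)\<bar> \<le> \<bar>a\<bar> * \<bar>b\<bar>" by (simp only: abs_mult)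
  moreover have "0 \<le> A * Bc * (1 / (x + y))" using assms by simp
  ultimately show ?thesis by simp
qed

lemma powr_small:
  fixes x :: real assumes "0 \<le> x" "x < 1" "k > 0"
  shows "\<bar>x powr (1 / real k)\<bar> \<le> 1"
proof -
  have "x powr (1 / real k) \<le> 1 powr (1 / real k)" using assms by (intro powr_mono2) auto
  then show ?thesis by simp
qed

locale cb =
  fixes mu1 mu2 :: "real measure" and k1 k2 :: nat
  assumes k1: "k1 > 0" and k2: "k2 > 0"
    and sets1: "sets mu1 = sets borel" and sets2: "sets mu2 = sets borel"
    and supp1: "AE x in mu1. 0 \<le> x" and supp2: "AE y in mu2. 0 \<le> y"
    and diag: "AE p in mu1 \<Otimes>\<^sub>M mu2. fst p + snd p > 0"
    and mom1: "\<And>i::nat. integrable mu1 (\<lambda>x. x powr (real i / real k1))"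
    and mom2: "\<And>j::nat. integrable mu2 (\<lambda>y. y powr (real j / real k2))"
    and fin1: "finite_measure mu1" and fin2: "finite_measure mu2"
    and int0: "integrable (mu1 \<Otimes>\<^sub>M mu2) (\<lambda>(x, y). 1 / (x + y) :: real)"
begin

sublocale PS: pair_sigma_finite mu1 mu2
  using fin1 fin2 unfolding finite_measure_def pair_sigma_finite_def by blast

lemma Fint: "integrable mu1 (\<lambda>x. poly p (x powr (1 / real k1)))"
  by (rule poly_powr_integrable[OF fin1 mom1])

lemma Gint: "integrable mu2 (\<lambda>y. poly q (y powr (1 / real k2)))"
  by (rule poly_powr_integrable[OF fin2 mom2])

lemma Fmeas[measurable]: "(\<lambda>x. poly p (x powr (1 / real k1))) \<in> borel_measurable mu1"
  using Fint by (rule borel_measurable_integrable)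

lemma Gmeas[measurable]: "(\<lambda>y. poly q (y powr (1 / real k2))) \<in> borel_measurable mu2"
  using Gint by (rule borel_measurable_integrable)

lemma meas1[measurable]: "(\<lambda>x. x) \<in> borel_measurable mu1"
  by (rule measurable_ident_sets[OF sets1])

lemma meas2[measurable]: "(\<lambda>x. x) \<in> borel_measurable mu2"
  by (rule measurable_ident_sets[OF sets2])

lemma prodint:
  fixes f g :: "real \<Rightarrow> real"
  assumes f: "integrable mu1 f" and g: "integrable mu2 g"
  shows "integrable (mu1 \<Otimes>\<^sub>M mu2) (\<lambda>(x, y). f x * g y)"
proof (rule PS.Fubini_integrable)
  have [measurable]: "f \<in> borel_measurable mu1" "g \<in> borel_measurable mu2"
    using f g by (auto intro: borel_measurable_integrable)
  show "(\<lambda>(x, y). f x * g y) \<in> borel_measurable (mu1 \<Otimes>\<^sub>M mu2)" by measurable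
  have "integrable mu1 (\<lambda>x. \<bar>f x\<bar> * (\<integral>y. \<bar>g y\<bar> \<partial>mu2))"
    using f by (intro integrable_mult_left integrable_abs)
  then show "integrable mu1 (\<lambda>x. \<integral>y. norm ((\<lambda>(x, y). f x * g y) (x, y)) \<partial>mu2)"
    by (simp add: abs_mult)
  show "AE x in mu1. integrable mu2 (\<lambda>y. (\<lambda>(x, y). f x * g y) (x, y))"
    using g by (intro AE_I2) simp
qed

lemma AEpos: "AE z in mu1 \<Otimes>\<^sub>M mu2. 0 \<le> fst z \<and> 0 \<le> snd z \<and> 0 < fst z + snd z"
proof -
  have "AE z in mu1 \<Otimes>\<^sub>M mu2. 0 \<le> fst z \<and> 0 \<le> snd z"
  proof (rule PS.AE_pair_measure)
    show "{x \<in> space (mu1 \<Otimes>\<^sub>M mu2). 0 \<le> fst x \<and> 0 \<le> snd x} \<in> sets (mu1 \<Otimes>\<^sub>M mu2)"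
      by measurable
    have "AE x in mu1. AE y in mu2. 0 \<le> x \<and> 0 \<le> y"
      using supp1
    proof (rule eventually_mono)
      fix x :: real assume x: "0 \<le> x"
      show "AE y in mu2. 0 \<le> x \<and> 0 \<le> y"
        using supp2 by (rule eventually_mono) (simp add: x)
    qed
    then show "AE x in mu1. AE y in mu2. 0 \<le> fst (x, y) \<and> 0 \<le> snd (x, y)" by simp
  qed
  with diag show ?thesis by eventually_elim auto
qed

end



context cb
begin

definition K :: "real poly \<Rightarrow> real poly \<Rightarrow> real \<times> real \<Rightarrow> real" where
  "K p q z = poly p (fst z powr (1 / real k1)) * poly q (snd z powr (1 / real k2)) / (fst z + snd z)"

definition B :: "real poly \<Rightarrow> real poly \<Rightarrow> real" where
  "B p q = integral\<^sup>L (mu1 \<Otimes>\<^sub>M mu2) (K p q)"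

lemma cpair_B: "cpair mu1 mu2 (\<lambda>x. poly p (x powr (1 / real k1))) (\<lambda>y. poly q (y powr (1 / real k2))) = B p q"
  unfolding cpair_def B_def K_def case_prod_beta' by simp

lemma K_meas[measurable]: "K p q \<in> borel_measurable (mu1 \<Otimes>\<^sub>M mu2)"
  unfolding K_def by measurable

lemma int0': "integrable (mu1 \<Otimes>\<^sub>M mu2) (\<lambda>z. 1 / (fst z + snd z))"
  using int0 unfolding case_prod_beta' .

lemma prodint':
  fixes f g :: "real \<Rightarrow> real"
  assumes "integrable mu1 f" "integrable mu2 g"
  shows "integrable (mu1 \<Otimes>\<^sub>M mu2) (\<lambda>z. f (fst z) * g (snd z))"
  using prodint[OF assms] unfolding case_prod_beta' .

lemma Bint: "integrable (mu1 \<Otimes>\<^sub>M mu2) (K p q)"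
proof -
  define Cp where "Cp = (\<Sum>i\<le>degree p. \<bar>coeff p i\<bar>)"
  define Cq where "Cq = (\<Sum>i\<le>degree q. \<bar>coeff q i\<bar>)"
  have Cp0: "0 \<le> Cp" and Cq0: "0 \<le> Cq" unfolding Cp_def Cq_def by (auto intro: sum_nonneg)
  define f where "f z = Cp * Cq * (1 / (fst z + snd z)) + \<bar>poly p (fst z powr (1 / real k1))\<bar> * \<bar>poly q (snd z powr (1 / real k2))\<bar>" for z
  have fi: "integrable (mu1 \<Otimes>\<^sub>M mu2) f"
    unfolding f_def
    by (intro Bochner_Integration.integrable_add integrable_mult_right int0' prodint' integrable_abs Fint Gint)
  show ?thesis
  proof (rule Bochner_Integration.integrable_bound[OF fi K_meas])
    show "AE z in mu1 \<Otimes>\<^sub>M mu2. norm (K p q z) \<le> norm (f z)"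
      using AEpos
    proof (rule eventually_mono)
      fix z :: "real \<times> real"
      assume z: "0 \<le> fst z \<and> 0 \<le> snd z \<and> 0 < fst z + snd z"
      have "\<bar>K p q z\<bar> \<le> f z"
        unfolding K_def f_def
      proof (rule bound_pt)
        assume s: "fst z + snd z < 1"
        have "\<bar>fst z powr (1 / real k1)\<bar> \<le> 1" using z s k1 by (intro powr_small) auto
        moreover have "\<bar>snd z powr (1 / real k2)\<bar> \<le> 1" using z s k2 by (intro powr_small) auto
        ultimately show "\<bar>poly p (fst z powr (1 / real k1))\<bar> \<le> Cp \<and> \<bar>poly q (snd z powr (1 / real k2))\<bar> \<le> Cq"
          unfolding Cp_def Cq_def by (auto intro: poly_bound1)
      qed (use z Cp0 Cq0 in auto)
      moreover have "0 \<le> f z" unfolding f_def using z Cp0 Cq0 by simp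
      ultimately show "norm (K p q z) \<le> norm (f z)" by simp
    qed
  qed
qed

lemma B_add1: "B (p1 + p2) q = B p1 q + B p2 q"
proof -
  have "K (p1 + p2) q = (\<lambda>z. K p1 q z + K p2 q z)"
    by (auto simp: fun_eq_iff K_def add_divide_distrib distrib_right)
  then show ?thesis unfolding B_def using Bochner_Integration.integral_add[OF Bint Bint] by simp
qed

lemma B_add2: "B p (q1 + q2) = B p q1 + B p q2"
proof -
  have "K p (q1 + q2) = (\<lambda>z. K p q1 z + K p q2 z)"
    by (auto simp: fun_eq_iff K_def add_divide_distrib distrib_left)
  then show ?thesis unfolding B_def using Bochner_Integration.integral_add[OF Bint Bint] by simp
qed

lemma B_smult1: "B (smult c p) q = c * B p q"
proof -
  have "K (smult c p) q = (\<lambda>z. c * K p q z)" by (auto simp: fun_eq_iff K_def)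
  then show ?thesis unfolding B_def by simp
qed

lemma B_smult2: "B p (smult c q) = c * B p q"
proof -
  have "K p (smult c q) = (\<lambda>z. c * K p q z)" by (auto simp: fun_eq_iff K_def)
  then show ?thesis unfolding B_def by simp
qed

lemma B_zero1: "B 0 q = 0"
  using B_smult1[of 0 0 q] by simp

lemma B_zero2: "B p 0 = 0"
  using B_smult2[of p 0 0] by simp

lemma B_lin1:
  assumes "finite J"
  shows "B (\<Sum>j\<in>J. smult (c j) (f j)) q = (\<Sum>j\<in>J. c j * B (f j) q)"
  using assms by (induction J rule: finite_induct) (simp_all add: B_zero1 B_add1 B_smult1)

lemma B_lin2:
  assumes "finite J"
  shows "B p (\<Sum>j\<in>J. smult (c j) (f j)) = (\<Sum>j\<in>J. c j * B p (f j))"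
  using assms by (induction J rule: finite_induct) (simp_all add: B_zero2 B_add2 B_smult2)

end



locale cb2 = cb +
  fixes P Q :: "nat \<Rightarrow> real poly" and h :: "nat \<Rightarrow> real"
  assumes P_monic: "\<And>m. degree (P m) = m \<and> lead_coeff (P m) = 1"
    and Q_monic: "\<And>m. degree (Q m) = m \<and> lead_coeff (Q m) = 1"
    and h_pos: "\<And>m. h m > 0"
    and biorthB: "\<And>m l. B (P m) (Q l) = (if m = l then h m else 0)"
begin

lemma expandQ:
  assumes "degree p \<le> N"
  shows "p = (\<Sum>j\<le>N. smult (B (P j) p / B (P j) (Q j)) (Q j))"
proof -
  obtain c where pc: "p = (\<Sum>j\<le>N. smult (c j) (Q j))"
    using monic_expand[OF Q_monic assms] by blast
  have cj: "B (P b) p = c b * h b" if "b \<le> N" for b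
  proof -
    have "B (P b) p = (\<Sum>j\<le>N. c j * B (P b) (Q j))"
      by (subst pc) (rule B_lin2, simp)
    also have "\<dots> = (\<Sum>j\<le>N. if j = b then c b * h b else 0)"
      by (intro sum.cong) (auto simp: biorthB)
    also have "\<dots> = c b * h b" using that by (simp add: sum.delta)
    finally show ?thesis .
  qed
  have "p = (\<Sum>j\<le>N. smult (c j) (Q j))" by (rule pc)
  also have "\<dots> = (\<Sum>j\<le>N. smult (B (P j) p / B (P j) (Q j)) (Q j))"
  proof (intro sum.cong refl)
    fix j assume "j \<in> {..N}"
    then have "B (P j) p / B (P j) (Q j) = c j" using cj[of j] h_pos[of j] by (simp add: biorthB)
    then show "smult (c j) (Q j) = smult (B (P j) p / B (P j) (Q j)) (Q j)" by simp
  qed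
  finally show ?thesis .
qed

lemma orthQ:
  assumes "degree S < n" "n \<le> l"
  shows "B S (Q l) = 0"
proof -
  have "degree S \<le> n - 1" using assms by simp
  then obtain d where sd: "S = (\<Sum>i\<le>n - 1. smult (d i) (P i))"
    using monic_expand[OF P_monic] by blast
  have "B S (Q l) = (\<Sum>i\<le>n - 1. d i * B (P i) (Q l))"
    by (subst sd) (rule B_lin1, simp)
  also have "\<dots> = 0"
    using assms by (intro sum.neutral) (auto simp: biorthB)
  finally show ?thesis .
qed

end



context cb2
begin

lemma main:
  fixes n :: nat
  assumes denom: "(\<integral>y. poly (Q n) (y powr (1 / real k2)) \<partial>mu2) \<noteq> 0"
  defines "a \<equiv> - (\<integral>y. poly (Q (Suc n)) (y powr (1 / real k2)) \<partial>mu2)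
                   / (\<integral>y. poly (Q n) (y powr (1 / real k2)) \<partial>mu2)"
  defines "g \<equiv> (\<lambda>y. y * (poly (Q (Suc n)) (y powr (1 / real k2))
                           + a * poly (Q n) (y powr (1 / real k2))))"
  shows "\<forall>y \<ge> 0. g y = (\<Sum>\<alpha> = n - k1 .. n + k2 + 1.
            (cpair mu1 mu2 (\<lambda>x. poly (P \<alpha>) (x powr (1 / real k1))) g
              / cpair mu1 mu2 (\<lambda>x. poly (P \<alpha>) (x powr (1 / real k1)))
                                        (\<lambda>y. poly (Q \<alpha>) (y powr (1 / real k2))))
            * poly (Q \<alpha>) (y powr (1 / real k2)))"
proof -
  define R where "R = Q (Suc n) + smult a (Q n)"
  define T where "T = monom 1 k2 * R"
  define N where "N = n + k2 + 1"
  have polyR: "poly R z = poly (Q (Suc n)) z + a * poly (Q n) z" for z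
    unfolding R_def by simp
  have polyT: "poly T (y powr (1 / real k2)) = y * poly R (y powr (1 / real k2))" if "0 \<le> y" for y
    unfolding T_def using powr_pow_inv[OF that k2] by (simp add: poly_monom)
  have gT: "g y = poly T (y powr (1 / real k2))" if "0 \<le> y" for y
    using polyT[OF that] unfolding g_def polyR by simp
  have g_meas[measurable]: "g \<in> borel_measurable mu2" unfolding g_def by measurable
  have cpg: "cpair mu1 mu2 (\<lambda>x. poly (P j) (x powr (1 / real k1))) g = B (P j) T" for j
    unfolding cpair_def B_def case_prod_beta'
  proof (rule integral_cong_AE)
    show "(\<lambda>x. poly (P j) (fst x powr (1 / real k1)) * g (snd x) / (fst x + snd x)) \<in> borel_measurable (mu1 \<Otimes>\<^sub>M mu2)"
      by measurable
    show "K (P j) T \<in> borel_measurable (mu1 \<Otimes>\<^sub>M mu2)" by measurable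
    show "AE x in mu1 \<Otimes>\<^sub>M mu2. poly (P j) (fst x powr (1 / real k1)) * g (snd x) / (fst x + snd x) = K (P j) T x"
      using AEpos by (rule eventually_mono) (simp add: K_def gT)
  qed
  have intG: "(\<integral>y. poly R (y powr (1 / real k2)) \<partial>mu2) = 0"
  proof -
    have "(\<integral>y. poly R (y powr (1 / real k2)) \<partial>mu2)
        = (\<integral>y. poly (Q (Suc n)) (y powr (1 / real k2)) \<partial>mu2) + a * (\<integral>y. poly (Q n) (y powr (1 / real k2)) \<partial>mu2)"
      unfolding polyR using Bochner_Integration.integral_add[OF Gint integrable_mult_right[OF Gint]] by simp
    also have "\<dots> = 0" unfolding a_def using denom by simp
    finally show ?thesis .
  qed
  have vanish: "B (P j) T = 0" if j: "j + k1 < n" for j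
  proof -
    define S where "S = monom 1 k1 * P j"
    have "degree S \<le> k1 + j" unfolding S_def
      using degree_mult_le[of "monom (1::real) k1" "P j"] degree_monom_le[of "1::real" k1] P_monic[of j] by simp
    then have degS: "degree S < n" using j by simp
    have BSR: "B S R = 0" unfolding R_def
      using orthQ[OF degS, of "Suc n"] orthQ[OF degS, of n] by (simp add: B_add2 B_smult2)
    have polyS: "poly S (x powr (1 / real k1)) = x * poly (P j) (x powr (1 / real k1))" if "0 \<le> x" for x
      unfolding S_def using powr_pow_inv[OF that k1] by (simp add: poly_monom)
    let ?FG = "\<lambda>z. poly (P j) (fst z powr (1 / real k1)) * poly R (snd z powr (1 / real k2))"
    have "B (P j) T = integral\<^sup>L (mu1 \<Otimes>\<^sub>M mu2) (\<lambda>z. ?FG z - K S R z)"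
      unfolding B_def
    proof (rule integral_cong_AE)
      show "K (P j) T \<in> borel_measurable (mu1 \<Otimes>\<^sub>M mu2)" by measurable
      show "(\<lambda>z. ?FG z - K S R z) \<in> borel_measurable (mu1 \<Otimes>\<^sub>M mu2)" by measurable
      show "AE z in mu1 \<Otimes>\<^sub>M mu2. K (P j) T z = ?FG z - K S R z"
        using AEpos
      proof (rule eventually_mono)
        fix z :: "real \<times> real" assume z: "0 \<le> fst z \<and> 0 \<le> snd z \<and> 0 < fst z + snd z"
        then have ne: "fst z + snd z \<noteq> 0" by simp
        show "K (P j) T z = ?FG z - K S R z"
          unfolding K_def using z ne polyS[of "fst z"] polyT[of "snd z"]
          by (simp add: field_simps)
      qed
    qed
    also have "\<dots> = integral\<^sup>L (mu1 \<Otimes>\<^sub>M mu2) ?FG - B S R"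
      unfolding B_def by (rule Bochner_Integration.integral_diff[OF prodint'[OF Fint Gint] Bint])
    also have "integral\<^sup>L (mu1 \<Otimes>\<^sub>M mu2) ?FG = 0"
    proof -
      have "(\<integral>x. (\<integral>y. poly (P j) (x powr (1 / real k1)) * poly R (y powr (1 / real k2)) \<partial>mu2) \<partial>mu1)
          = integral\<^sup>L (mu1 \<Otimes>\<^sub>M mu2) (\<lambda>(x, y). poly (P j) (x powr (1 / real k1)) * poly R (y powr (1 / real k2)))"
        by (rule PS.integral_fst) (rule prodint[OF Fint Gint])
      moreover have "(\<integral>x. (\<integral>y. poly (P j) (x powr (1 / real k1)) * poly R (y powr (1 / real k2)) \<partial>mu2) \<partial>mu1) = 0"
        using intG by simp
      ultimately show ?thesis unfolding case_prod_beta' by simp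
    qed
    finally show ?thesis using BSR by simp
  qed
  have degR: "degree R \<le> Suc n" unfolding R_def
    using degree_add_le[of "Q (Suc n)" "Suc n" "smult a (Q n)"] degree_smult_le[of a "Q n"] Q_monic[of n] Q_monic[of "Suc n"]
    by simp
  have degT: "degree T \<le> N" unfolding T_def N_def
    using degree_mult_le[of "monom (1::real) k2" R] degree_monom_le[of "1::real" k2] degR by simp
  define c where "c j = B (P j) T / B (P j) (Q j)" for j
  have Texp: "T = (\<Sum>j\<le>N. smult (c j) (Q j))" unfolding c_def by (rule expandQ[OF degT])
  show ?thesis
  proof (intro allI impI)
    fix y :: real assume y: "0 \<le> y"
    have "g y = poly T (y powr (1 / real k2))" by (rule gT[OF y])
    also have "\<dots> = (\<Sum>j\<le>N. c j * poly (Q j) (y powr (1 / real k2)))"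
      by (subst Texp) (simp add: poly_sum)
    also have "\<dots> = (\<Sum>j = n - k1 .. N. c j * poly (Q j) (y powr (1 / real k2)))"
    proof (rule sum.mono_neutral_right)
      show "finite {..N}" by simp
      show "{n - k1..N} \<subseteq> {..N}" by auto
      show "\<forall>j\<in>{..N} - {n - k1..N}. c j * poly (Q j) (y powr (1 / real k2)) = 0"
      proof
        fix j assume "j \<in> {..N} - {n - k1..N}"
        then have "j + k1 < n" by auto
        then show "c j * poly (Q j) (y powr (1 / real k2)) = 0" unfolding c_def using vanish by simp
      qed
    qed
    also have "\<dots> = (\<Sum>\<alpha> = n - k1 .. n + k2 + 1.
            (cpair mu1 mu2 (\<lambda>x. poly (P \<alpha>) (x powr (1 / real k1))) g
              / cpair mu1 mu2 (\<lambda>x. poly (P \<alpha>) (x powr (1 / real k1)))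
                                        (\<lambda>y. poly (Q \<alpha>) (y powr (1 / real k2))))
            * poly (Q \<alpha>) (y powr (1 / real k2)))"
      unfolding N_def c_def cpg cpair_B ..
    finally show "g y = (\<Sum>\<alpha> = n - k1 .. n + k2 + 1.
            (cpair mu1 mu2 (\<lambda>x. poly (P \<alpha>) (x powr (1 / real k1))) g
              / cpair mu1 mu2 (\<lambda>x. poly (P \<alpha>) (x powr (1 / real k1)))
                                        (\<lambda>y. poly (Q \<alpha>) (y powr (1 / real k2))))
            * poly (Q \<alpha>) (y powr (1 / real k2)))" .
  qed
qed

end

theorem corollary2p2:
  fixes k1 k2 :: nat and mu1 mu2 :: "real measure"
    and P Q :: "nat \<Rightarrow> real poly" and h :: "nat \<Rightarrow> real" and n :: nat
  assumes k1_pos: "k1 > 0" and k2_pos: "k2 > 0"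
    and sets1: "sets mu1 = sets borel" and sets2: "sets mu2 = sets borel"
    and supp1: "AE x in mu1. 0 \<le> x" and supp2: "AE y in mu2. 0 \<le> y"
    and diag: "AE p in mu1 \<Otimes>\<^sub>M mu2. fst p + snd p > 0"
    and mom1: "\<And>i::nat. integrable mu1 (\<lambda>x. x powr (real i / real k1))"
    and mom2: "\<And>j::nat. integrable mu2 (\<lambda>y. y powr (real j / real k2))"
    and mom12: "\<And>i j::nat. integrable (mu1 \<Otimes>\<^sub>M mu2)
        (\<lambda>(x, y). x powr (real i / real k1) * y powr (real j / real k2) / (x + y))"
    and mom12y: "\<And>i j::nat. integrable (mu1 \<Otimes>\<^sub>M mu2)
        (\<lambda>(x, y). x powr (real i / real k1) * (y * y powr (real j / real k2)) / (x + y))"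
    and P_monic: "\<And>m. degree (P m) = m \<and> lead_coeff (P m) = 1"
    and Q_monic: "\<And>m. degree (Q m) = m \<and> lead_coeff (Q m) = 1"
    and h_pos: "\<And>m. h m > 0"
    and biorth: "\<And>m l. cpair mu1 mu2 (\<lambda>x. poly (P m) (x powr (1 / real k1)))
                                   (\<lambda>y. poly (Q l) (y powr (1 / real k2)))
                        = (if m = l then h m else 0)"
    and denom: "(\<integral>y. poly (Q n) (y powr (1 / real k2)) \<partial>mu2) \<noteq> 0"
  shows "let a = - (\<integral>y. poly (Q (Suc n)) (y powr (1 / real k2)) \<partial>mu2)
                   / (\<integral>y. poly (Q n) (y powr (1 / real k2)) \<partial>mu2);
             g = (\<lambda>y. y * (poly (Q (Suc n)) (y powr (1 / real k2))
                           + a * poly (Q n) (y powr (1 / real k2))));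
             eta = (\<lambda>\<alpha>. cpair mu1 mu2 (\<lambda>x. poly (P \<alpha>) (x powr (1 / real k1))) g
                        / cpair mu1 mu2 (\<lambda>x. poly (P \<alpha>) (x powr (1 / real k1)))
                                        (\<lambda>y. poly (Q \<alpha>) (y powr (1 / real k2))))
         in \<forall>y \<ge> 0. g y = (\<Sum>\<alpha> = n - k1 .. n + k2 + 1. eta \<alpha> * poly (Q \<alpha>) (y powr (1 / real k2)))"
  proof -
  have P0: "P 0 = 1" using P_monic[of 0] by (metis degree_0_id one_pCons)
  have Q0: "Q 0 = 1" using Q_monic[of 0] by (metis degree_0_id one_pCons)
  have "cpair mu1 mu2 (\<lambda>x. poly (P 0) (x powr (1 / real k1))) (\<lambda>y. poly (Q 0) (y powr (1 / real k2))) = h 0"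
    using biorth[of 0 0] by simp
  then have I0: "integral\<^sup>L (mu1 \<Otimes>\<^sub>M mu2) (\<lambda>(x, y). 1 / (x + y)) = h 0"
    unfolding cpair_def P0 Q0 by simp
  then have nz: "integral\<^sup>L (mu1 \<Otimes>\<^sub>M mu2) (\<lambda>(x, y). 1 / (x + y)) \<noteq> (0::real)"
    using h_pos[of 0] by simp
  then have int0: "integrable (mu1 \<Otimes>\<^sub>M mu2) (\<lambda>(x, y). 1 / (x + y) :: real)"
    using not_integrable_integral_eq by blast
  have m10: "integrable mu1 (\<lambda>x. x powr 0)" using mom1[of 0] by simp
  have m20: "integrable mu2 (\<lambda>x. x powr 0)" using mom2[of 0] by simp
  have fin1: "finite_measure mu1"
    by (rule fin_of_zero[OF sets1 m10 fin_zero1[OF sets1 sets2 diag nz]])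
  have fin2: "finite_measure mu2"
    by (rule fin_of_zero[OF sets2 m20 fin_zero2[OF sets1 sets2 diag nz]])
  interpret cb mu1 mu2 k1 k2
    by (rule cb.intro[OF k1_pos k2_pos sets1 sets2 supp1 supp2 diag mom1 mom2 fin1 fin2 int0])
  interpret cb2 mu1 mu2 k1 k2 P Q h
  proof (unfold_locales)
    show "\<And>m. degree (P m) = m \<and> lead_coeff (P m) = 1" by (rule P_monic)
    show "\<And>m. degree (Q m) = m \<and> lead_coeff (Q m) = 1" by (rule Q_monic)
    show "\<And>m. h m > 0" by (rule h_pos)
    show "\<And>m l. B (P m) (Q l) = (if m = l then h m else 0)"
      using biorth by (simp add: cpair_B)
  qed
  show ?thesis unfolding Let_def by (rule main[OF denom])
qed

end
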